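(* Let $(X,d)$ be a metric space and $\mu$ a non-atomic Borel measure on $X$. For every path $\gamma:[a,b]\to X$ in $\Gamma^\mu$, the function $\nu_\gamma$ is strictly increasing, continuous, maps $[a,b]$ onto $[0,h(\gamma)]$, and for every $x\in[a,b]$, $h(\gamma)=h(\gamma|_{[a,x]})+h(\gamma|_{[x,b]})$.
   Context: A path is a continuous map $\gamma:[a,b]\to X$; a subpath is a restriction to a subinterval, trivial if that interval is a point; $\mathrm{Im}(\gamma)=\gamma([a,b])$. $\mu$ non-atomic: $\mu(\{x\})=0$ for all $x$. $\Gamma^\mu$ is the set of all non-trivial injective paths $\gamma$ with $0<\mu(\mathrm{Im}(\tilde\gamma))<\infty$ for every non-trivial subpath $\tilde\gamma$. For any path $\eta$ (including subpaths), $h(\eta)=\mu(\mathrm{Im}(\eta))$; for $\gamma:[a,b]\to X$ in $\Gamma^\mu$, $\nu_\gamma:[a,b]\to\mathbb R$, $\nu_\gamma(x)=h(\gamma|_{[a,x]})$. *)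

theory Defs
  imports "HOL-Analysis.Analysis"
begin

text \<open>A path is a continuous map gamma restricted to the interval {a..b}; the
  subpath on {c..d} is gamma restricted to {c..d}; its image is gamma ` {c..d}.\<close>

definition non_atomic :: "'a measure \<Rightarrow> bool" where
  "non_atomic \<mu> \<longleftrightarrow> (\<forall>x. emeasure \<mu> {x} = 0)"

definition h_path :: "'a measure \<Rightarrow> (real \<Rightarrow> 'a) \<Rightarrow> real \<Rightarrow> real \<Rightarrow> real" where
  "h_path \<mu> \<gamma> c d = measure \<mu> (\<gamma> ` {c..d})"

definition in_Gamma :: "'a::topological_space measure \<Rightarrow> (real \<Rightarrow> 'a) \<Rightarrow> real \<Rightarrow> real \<Rightarrow> bool" where
  "in_Gamma \<mu> \<gamma> a b \<longleftrightarrow>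
     a < b \<and> continuous_on {a..b} \<gamma> \<and> inj_on \<gamma> {a..b} \<and>
     (\<forall>c d. a \<le> c \<and> c < d \<and> d \<le> b \<longrightarrow>
        0 < emeasure \<mu> (\<gamma> ` {c..d}) \<and> emeasure \<mu> (\<gamma> ` {c..d}) < \<infinity>)"

definition nu_path :: "'a measure \<Rightarrow> (real \<Rightarrow> 'a) \<Rightarrow> real \<Rightarrow> real \<Rightarrow> real" where
  "nu_path \<mu> \<gamma> a x = h_path \<mu> \<gamma> a x"

end

theory Submission
  imports Defs
begin

theorem lemma2p1:
  fixes \<mu> :: "'a::metric_space measure" and \<gamma> :: "real \<Rightarrow> 'a" and a b :: real
  assumes "sets \<mu> = sets borel"
    and "non_atomic \<mu>"
    and "in_Gamma \<mu> \<gamma> a b"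
  shows "strict_mono_on {a..b} (nu_path \<mu> \<gamma> a)
    \<and> continuous_on {a..b} (nu_path \<mu> \<gamma> a)
    \<and> nu_path \<mu> \<gamma> a ` {a..b} = {0..h_path \<mu> \<gamma> a b}
    \<and> (\<forall>x\<in>{a..b}. h_path \<mu> \<gamma> a b = h_path \<mu> \<gamma> a x + h_path \<mu> \<gamma> x b)"
proof -
  have ab: "a < b" and cont: "continuous_on {a..b} \<gamma>" and inj: "inj_on \<gamma> {a..b}"
    and pos: "\<And>c d. a \<le> c \<Longrightarrow> c < d \<Longrightarrow> d \<le> b \<Longrightarrow> 0 < emeasure \<mu> (\<gamma> ` {c..d})"
    and fin: "\<And>c d. a \<le> c \<Longrightarrow> c < d \<Longrightarrow> d \<le> b \<Longrightarrow> emeasure \<mu> (\<gamma> ` {c..d}) < \<infinity>"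
    using assms(3) unfolding in_Gamma_def by auto
  have sing: "emeasure \<mu> {x} = 0" for x using assms(2) unfolding non_atomic_def by auto
  have meas: "\<gamma> ` {c..d} \<in> sets \<mu>" if "a \<le> c" "d \<le> b" for c d
  proof -
    have "compact (\<gamma> ` {c..d})"
      by (rule compact_continuous_image) (use cont that in \<open>auto intro: continuous_on_subset\<close>)
    then show ?thesis using assms(1) by (simp add: compact_imp_closed borel_closed)
  qed
  have fm: "\<gamma> ` {c..d} \<in> fmeasurable \<mu>" if "a \<le> c" "d \<le> b" for c d
  proof (cases "c < d")
    case True then show ?thesis using fin meas that by (auto intro: fmeasurableI)
  next
    case False
    then have "\<gamma> ` {c..d} = {} \<or> \<gamma> ` {c..d} = {\<gamma> c}" by (cases "c = d") auto
    then show ?thesis using sing meas that by (auto intro!: fmeasurableI)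
  qed
  have msing: "measure \<mu> {x} = 0" for x using sing by (simp add: measure_def)
  have hpos: "0 < h_path \<mu> \<gamma> c d" if "a \<le> c" "c < d" "d \<le> b" for c d
  proof -
    have "emeasure \<mu> (\<gamma> ` {c..d}) = ennreal (measure \<mu> (\<gamma> ` {c..d}))"
      using fm[of c d] that by (simp add: emeasure_eq_measure2)
    then show ?thesis using pos[OF that] unfolding h_path_def by auto
  qed
  have add: "h_path \<mu> \<gamma> c d = h_path \<mu> \<gamma> c x + h_path \<mu> \<gamma> x d"
    if "a \<le> c" "c \<le> x" "x \<le> d" "d \<le> b" for c x d
  proof -
    have "{c..d} = {c..x} \<union> {x..d}" using that by auto
    then have U: "\<gamma> ` {c..d} = \<gamma> ` {c..x} \<union> \<gamma> ` {x..d}" by (metis image_Un)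
    have I: "\<gamma> ` {c..x} \<inter> \<gamma> ` {x..d} = {\<gamma> x}"
    proof
      show "\<gamma> ` {c..x} \<inter> \<gamma> ` {x..d} \<subseteq> {\<gamma> x}"
      proof
        fix z assume "z \<in> \<gamma> ` {c..x} \<inter> \<gamma> ` {x..d}"
        then obtain s t where st: "s \<in> {c..x}" "t \<in> {x..d}" "z = \<gamma> s" "z = \<gamma> t" by auto
        then have "s = t" using inj that unfolding inj_on_def by (metis atLeastAtMost_iff order_trans)
        then show "z \<in> {\<gamma> x}" using st by auto
      qed
    qed (use that in auto)
    show ?thesis unfolding h_path_def U
      using measure_Un3[OF fm fm, of c x x d] that I msing by auto
  qed
  define nu where "nu = nu_path \<mu> \<gamma> a"
  have nu: "nu x = h_path \<mu> \<gamma> a x" for x unfolding nu_def nu_path_def by simp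
  have nua: "nu a = 0" using msing by (simp add: nu h_path_def)
  have smono: "strict_mono_on {a..b} nu"
  proof (rule strict_mono_onI)
    fix x y assume "x \<in> {a..b}" "y \<in> {a..b}" "x < y"
    then show "nu x < nu y" using add[of a x y] hpos[of x y] by (auto simp: nu)
  qed
  have hmono: "h_path \<mu> \<gamma> c x \<le> h_path \<mu> \<gamma> c d" if "a \<le> c" "c \<le> x" "x \<le> d" "d \<le> b" for c x d
    using add[OF that] measure_nonneg[of \<mu>] unfolding h_path_def by (metis le_add_same_cancel1)
  have hmono2: "h_path \<mu> \<gamma> x d \<le> h_path \<mu> \<gamma> c d" if "a \<le> c" "c \<le> x" "x \<le> d" "d \<le> b" for c x d
    using add[OF that] measure_nonneg[of \<mu>] unfolding h_path_def by (metis le_add_same_cancel2)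
  have R: "\<exists>d>0. \<forall>y. x \<le> y \<and> y \<le> b \<and> y < x + d \<longrightarrow> h_path \<mu> \<gamma> x y < e"
    if "a \<le> x" "x \<le> b" "e > 0" for x e
  proof -
    define A where "A n = \<gamma> ` {x..min b (x + 1/(Suc n))}" for n :: nat
    have Ameas: "range A \<subseteq> sets \<mu>" using meas that by (auto simp: A_def)
    have Adec: "decseq A" unfolding A_def decseq_def
    proof (intro allI impI image_mono)
      fix m n :: nat assume "m \<le> n"
      then have "1/real (Suc n) \<le> 1/real (Suc m)" by (simp add: frac_le)
      then show "{x..min b (x + 1 / real (Suc n))} \<subseteq> {x..min b (x + 1 / real (Suc m))}" by auto
    qed
    have Afin: "emeasure \<mu> (A n) \<noteq> \<infinity>" for n
      using fm[of x "min b (x + 1/(Suc n))"] that by (auto simp: A_def fmeasurable_def)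
    have Int: "(\<Inter>n. A n) = {\<gamma> x}"
    proof
      show "{\<gamma> x} \<subseteq> (\<Inter>n. A n)" using that by (auto simp: A_def)
      show "(\<Inter>n. A n) \<subseteq> {\<gamma> x}"
      proof
        fix z assume z: "z \<in> (\<Inter>n. A n)"
        have "z \<in> A 0" using z by blast
        then obtain t0 where t0: "t0 \<in> {x..min b (x + 1/(Suc 0))}" "z = \<gamma> t0" unfolding A_def by blast
        have le: "t0 \<le> x + 1/(Suc n)" for n
        proof -
          have "z \<in> A n" using z by blast
          then obtain t where t: "t \<in> {x..min b (x + 1/(Suc n))}" "z = \<gamma> t" unfolding A_def by blast
          have "t = t0" using inj t t0 that unfolding inj_on_def
            by (metis atLeastAtMost_iff min.bounded_iff order_trans)
          then show ?thesis using t by auto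
        qed
        have "t0 \<le> x"
        proof (rule ccontr)
          assume H: "\<not> t0 \<le> x"
          then have "0 < t0 - x" by simp
          then obtain n where n: "inverse (real (Suc n)) < t0 - x" using reals_Archimedean by blast
          have "inverse (real (Suc n)) = 1 / real (Suc n)" by (rule inverse_eq_divide)
          then show False using le[of n] n by linarith
        qed
        then show "z \<in> {\<gamma> x}" using t0 by auto
      qed
    qed
    have "(\<lambda>n. measure \<mu> (A n)) \<longlonglongrightarrow> 0"
      using Lim_measure_decseq[OF Ameas Adec Afin] Int msing by simp
    then have "\<forall>\<^sub>F n in sequentially. measure \<mu> (A n) < e"
      using that(3) by (rule order_tendstoD)
    then obtain n where n: "measure \<mu> (A n) < e"
      by (meson eventually_sequentially order_refl)
    show ?thesis
    proof (intro exI[of _ "1/real (Suc n)"] conjI allI impI)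
      show "0 < 1/real (Suc n)" by simp
      fix y assume y: "x \<le> y \<and> y \<le> b \<and> y < x + 1/real (Suc n)"
      have "h_path \<mu> \<gamma> x y \<le> measure \<mu> (A n)"
        using hmono[of x y "min b (x + 1/(Suc n))"] y that by (auto simp: A_def h_path_def)
      then show "h_path \<mu> \<gamma> x y < e" using n by linarith
    qed
  qed
  have L: "\<exists>d>0. \<forall>y. a \<le> y \<and> y \<le> x \<and> x - d < y \<longrightarrow> h_path \<mu> \<gamma> y x < e"
    if "a \<le> x" "x \<le> b" "e > 0" for x e
  proof -
    define A where "A n = \<gamma> ` {max a (x - 1/(Suc n))..x}" for n :: nat
    have Ameas: "range A \<subseteq> sets \<mu>" using meas that by (auto simp: A_def)
    have Adec: "decseq A" unfolding A_def decseq_def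
    proof (intro allI impI image_mono)
      fix m n :: nat assume "m \<le> n"
      then have "1/real (Suc n) \<le> 1/real (Suc m)" by (simp add: frac_le)
      then show "{max a (x - 1 / real (Suc n))..x} \<subseteq> {max a (x - 1 / real (Suc m))..x}" by auto
    qed
    have Afin: "emeasure \<mu> (A n) \<noteq> \<infinity>" for n
      using fm[of "max a (x - 1/(Suc n))" x] that by (auto simp: A_def fmeasurable_def)
    have Int: "(\<Inter>n. A n) = {\<gamma> x}"
    proof
      show "{\<gamma> x} \<subseteq> (\<Inter>n. A n)" using that by (auto simp: A_def)
      show "(\<Inter>n. A n) \<subseteq> {\<gamma> x}"
      proof
        fix z assume z: "z \<in> (\<Inter>n. A n)"
        have "z \<in> A 0" using z by blast
        then obtain t0 where t0: "t0 \<in> {max a (x - 1/(Suc 0))..x}" "z = \<gamma> t0" unfolding A_def by blast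
        have le: "x - 1/(Suc n) \<le> t0" for n
        proof -
          have "z \<in> A n" using z by blast
          then obtain t where t: "t \<in> {max a (x - 1/(Suc n))..x}" "z = \<gamma> t" unfolding A_def by blast
          have "t = t0" using inj t t0 that unfolding inj_on_def
            by (metis atLeastAtMost_iff max.bounded_iff order_trans)
          then show ?thesis using t by auto
        qed
        have "x \<le> t0"
        proof (rule ccontr)
          assume H: "\<not> x \<le> t0"
          then have "0 < x - t0" by simp
          then obtain n where n: "inverse (real (Suc n)) < x - t0" using reals_Archimedean by blast
          have "inverse (real (Suc n)) = 1 / real (Suc n)" by (rule inverse_eq_divide)
          then show False using le[of n] n by linarith
        qed
        then show "z \<in> {\<gamma> x}" using t0 by auto
      qed
    qed
    have "(\<lambda>n. measure \<mu> (A n)) \<longlonglongrightarrow> 0"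
      using Lim_measure_decseq[OF Ameas Adec Afin] Int msing by simp
    then have "\<forall>\<^sub>F n in sequentially. measure \<mu> (A n) < e"
      using that(3) by (rule order_tendstoD)
    then obtain n where n: "measure \<mu> (A n) < e"
      by (meson eventually_sequentially order_refl)
    show ?thesis
    proof (intro exI[of _ "1/real (Suc n)"] conjI allI impI)
      show "0 < 1/real (Suc n)" by simp
      fix y assume y: "a \<le> y \<and> y \<le> x \<and> x - 1/real (Suc n) < y"
      have "h_path \<mu> \<gamma> y x \<le> measure \<mu> (A n)"
        using hmono2[of "max a (x - 1/(Suc n))" y x] y that by (auto simp: A_def h_path_def)
      then show "h_path \<mu> \<gamma> y x < e" using n by linarith
    qed
  qed
  have cnt: "continuous_on {a..b} nu"
    unfolding continuous_on_iff
  proof (intro ballI allI impI)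
    fix x e :: real assume x: "x \<in> {a..b}" and e: "0 < e"
    obtain d1 where d1: "d1 > 0" "\<forall>y. x \<le> y \<and> y \<le> b \<and> y < x + d1 \<longrightarrow> h_path \<mu> \<gamma> x y < e"
      using R[of x e] x e by auto
    obtain d2 where d2: "d2 > 0" "\<forall>y. a \<le> y \<and> y \<le> x \<and> x - d2 < y \<longrightarrow> h_path \<mu> \<gamma> y x < e"
      using L[of x e] x e by auto
    show "\<exists>d>0. \<forall>x'\<in>{a..b}. dist x' x < d \<longrightarrow> dist (nu x') (nu x) < e"
    proof (intro exI[of _ "min d1 d2"] conjI ballI impI)
      show "0 < min d1 d2" using d1 d2 by simp
      fix y assume y: "y \<in> {a..b}" "dist y x < min d1 d2"
      show "dist (nu y) (nu x) < e"
      proof (cases "x \<le> y")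
        case True
        then have "nu y = nu x + h_path \<mu> \<gamma> x y" using add[of a x y] x y by (auto simp: nu)
        moreover have "h_path \<mu> \<gamma> x y < e" using d1(2) y True by (auto simp: dist_real_def)
        moreover have "0 \<le> h_path \<mu> \<gamma> x y" by (simp add: h_path_def)
        ultimately show ?thesis by (simp add: dist_real_def)
      next
        case False
        then have "nu x = nu y + h_path \<mu> \<gamma> y x" using add[of a y x] x y by (auto simp: nu)
        moreover have "h_path \<mu> \<gamma> y x < e" using d2(2) y False by (auto simp: dist_real_def)
        moreover have "0 \<le> h_path \<mu> \<gamma> y x" by (simp add: h_path_def)
        ultimately show ?thesis by (simp add: dist_real_def)
      qed
    qed
  qed
  have nub: "nu b = h_path \<mu> \<gamma> a b" by (simp add: nu)
  have img: "nu ` {a..b} = {0..h_path \<mu> \<gamma> a b}"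
  proof
    show "nu ` {a..b} \<subseteq> {0..h_path \<mu> \<gamma> a b}"
    proof
      fix z assume "z \<in> nu ` {a..b}"
      then obtain t where t: "t \<in> {a..b}" "z = nu t" by auto
      have "nu a \<le> nu t" using smono t ab by (cases "t = a") (auto simp: strict_mono_on_def less_imp_le)
      moreover have "nu t \<le> nu b" using smono t ab by (cases "t = b") (auto simp: strict_mono_on_def less_imp_le)
      ultimately show "z \<in> {0..h_path \<mu> \<gamma> a b}" using t nua nub by auto
    qed
    show "{0..h_path \<mu> \<gamma> a b} \<subseteq> nu ` {a..b}"
    proof
      fix y assume "y \<in> {0..h_path \<mu> \<gamma> a b}"
      then obtain t where "a \<le> t" "t \<le> b" "nu t = y"
        using IVT'[where f=nu and a=a and b=b and y=y] nua nub ab cnt by auto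
      then show "y \<in> nu ` {a..b}" by auto
    qed
  qed
  have "\<forall>x\<in>{a..b}. h_path \<mu> \<gamma> a b = h_path \<mu> \<gamma> a x + h_path \<mu> \<gamma> x b"
    using add[of a _ b] by auto
  then show ?thesis using smono cnt img unfolding nu_def by blast
qed

end
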